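(* Let $F:\mathbb{R}\to\mathbb{R}$ be a function (identified with its graph in $\mathbb{R}^2$). If $A\cap F\neq\emptyset$ for every closed set $A\subset\mathbb{R}^2$ such that $\pi(A)$ contains a nondegenerate interval, then $F$ is a connected subspace of $\mathbb{R}^2$.
   Context: $\pi:\mathbb{R}^2\to\mathbb{R}$ is the projection $(x,y)\mapsto x$. *)

theory Defs
  imports "HOL-Analysis.Analysis"
begin

text \<open>R^2 is modelled as real \<times> real; the projection pi is fst.
  The graph of F : R -> R is {(x, F x) | x}.\<close>

definition graph :: "(real \<Rightarrow> real) \<Rightarrow> (real \<times> real) set" where
  "graph F = {(x, F x) | x. True}"

definition nondegenerate_interval :: "real set \<Rightarrow> bool" where
  "nondegenerate_interval I \<longleftrightarrow> is_interval I \<and> (\<exists>a\<in>I. \<exists>b\<in>I. a \<noteq> b)"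

end

theory Submission
  imports Defs
begin

lemma line_connected: "connected (range (\<lambda>y::real. (d::real, y)))"
  by (intro connected_continuous_image continuous_intros) auto

lemma side_open:
  fixes F :: "real \<Rightarrow> real"
  assumes oU: "open U" and oV: "open V" and disj: "U \<inter> V = {}"
    and dense: "\<And>a b. a < b \<Longrightarrow> \<exists>d. a < d \<and> d < b \<and> (\<forall>y. (d, y) \<in> U \<union> V)"
    and cov: "\<And>x. (x, F x) \<in> U \<union> V"
  shows "open {x. (x, F x) \<in> U}"
  unfolding open_dist
proof (intro ballI)
  fix x assume "x \<in> {x. (x, F x) \<in> U}"
  then have xU: "(x, F x) \<in> U" by simp
  obtain del where del: "del > 0" "ball (x, F x) del \<subseteq> U"
    using oU xU open_contains_ball by blast
  show "\<exists>e>0. \<forall>y. dist y x < e \<longrightarrow> y \<in> {x. (x, F x) \<in> U}"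
  proof (intro exI[of _ del] conjI allI impI)
    show "del > 0" by (fact del(1))
    fix x' assume dx: "dist x' x < del"
    show "x' \<in> {x. (x, F x) \<in> U}"
    proof (rule ccontr)
      assume "x' \<notin> {x. (x, F x) \<in> U}"
      then have x'V: "(x', F x') \<in> V" using cov[of x'] by auto
      obtain eps where eps: "eps > 0" "ball (x', F x') eps \<subseteq> V"
        using oV x'V open_contains_ball by blast
      have lo: "max (x - del) (x' - eps) < min (x + del) (x' + eps)"
        using dx eps(1) del(1) by (auto simp: dist_real_def)
      obtain d where d: "max (x - del) (x' - eps) < d" "d < min (x + del) (x' + eps)"
        and line: "\<forall>y. (d, y) \<in> U \<union> V"
        using dense[OF lo] by blast
      have "(d, F x) \<in> ball (x, F x) del"
        using d by (auto simp: dist_Pair_Pair dist_real_def)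
      then have dU: "(d, F x) \<in> U" using del(2) by blast
      have "(d, F x') \<in> ball (x', F x') eps"
        using d by (auto simp: dist_Pair_Pair dist_real_def)
      then have dV: "(d, F x') \<in> V" using eps(2) by blast
      have "range (\<lambda>y. (d, y)) \<subseteq> U \<union> V" using line by auto
      moreover have "U \<inter> range (\<lambda>y. (d, y)) \<noteq> {}" using dU by auto
      moreover have "V \<inter> range (\<lambda>y. (d, y)) \<noteq> {}" using dV by auto
      ultimately show False
        using line_connected[of d] oU oV disj unfolding connected_def by blast
    qed
  qed
qed

theorem lemma2:
  fixes F :: "real \<Rightarrow> real"
  assumes "\<And>A :: (real \<times> real) set. closed A \<Longrightarrow>
             (\<exists>I. nondegenerate_interval I \<and> I \<subseteq> fst ` A) \<Longrightarrow> A \<inter> graph F \<noteq> {}"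
  shows "connected (graph F)"
proof (rule ccontr)
  let ?G = "graph F"
  assume "\<not> connected ?G"
  then obtain A B where AB: "closed A" "closed B" "?G \<subseteq> A \<union> B" "A \<inter> B \<inter> ?G = {}"
    "A \<inter> ?G \<noteq> {}" "B \<inter> ?G \<noteq> {}"
    unfolding connected_closed by blast
  define S1 where "S1 = A \<inter> ?G"
  define S2 where "S2 = B \<inter> ?G"
  define f where "f = (\<lambda>z. setdist {z} S2 - setdist {z} S1)"
  define U where "U = f -` {0<..}"
  define V where "V = f -` {..<0}"
  have contf: "continuous_on UNIV f" unfolding f_def by (intro continuous_intros)
  have oU: "open U" unfolding U_def
    using open_vimage[OF open_greaterThan contf] by simp
  have oV: "open V" unfolding V_def
    using open_vimage[OF open_lessThan contf] by simp
  have disj: "U \<inter> V = {}" unfolding U_def V_def by auto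
  have cl1: "closure S1 \<subseteq> A" unfolding S1_def using AB(1)
    by (simp add: closure_minimal)
  have cl2: "closure S2 \<subseteq> B" unfolding S2_def using AB(2)
    by (simp add: closure_minimal)
  have S1ne: "S1 \<noteq> {}" "S2 \<noteq> {}" using AB unfolding S1_def S2_def by auto
  have sub1: "S1 \<subseteq> U"
  proof
    fix z assume z: "z \<in> S1"
    have "setdist {z} S1 = 0" using z by (simp add: setdist_sing_in_set)
    moreover have "z \<notin> closure S2" using z cl2 AB(4) unfolding S1_def by auto
    then have "setdist {z} S2 \<noteq> 0" using S1ne by (simp add: setdist_eq_0_sing_1)
    then have "setdist {z} S2 > 0" using setdist_pos_le[of "{z}" S2] by linarith
    ultimately show "z \<in> U" unfolding U_def f_def by simp
  qed
  have sub2: "S2 \<subseteq> V"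
  proof
    fix z assume z: "z \<in> S2"
    have "setdist {z} S2 = 0" using z by (simp add: setdist_sing_in_set)
    moreover have "z \<notin> closure S1" using z cl1 AB(4) unfolding S2_def by auto
    then have "setdist {z} S1 \<noteq> 0" using S1ne by (simp add: setdist_eq_0_sing_1)
    then have "setdist {z} S1 > 0" using setdist_pos_le[of "{z}" S1] by linarith
    ultimately show "z \<in> V" unfolding V_def f_def by simp
  qed
  have Gmem: "(x, F x) \<in> ?G" for x unfolding graph_def by auto
  have cov: "(x, F x) \<in> U \<union> V" for x
    using Gmem[of x] AB(3) sub1 sub2 unfolding S1_def S2_def by blast
  have dense: "\<exists>d. a < d \<and> d < b \<and> (\<forall>y. (d, y) \<in> U \<union> V)" if ab: "a < b" for a b
  proof (rule ccontr)
    assume "\<not> ?thesis"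
    then have H: "\<forall>d. a < d \<and> d < b \<longrightarrow> (\<exists>y. (d, y) \<notin> U \<union> V)" by blast
    let ?K = "- (U \<union> V)"
    have "closed ?K" using oU oV by auto
    moreover have "nondegenerate_interval {a<..<b}"
      unfolding nondegenerate_interval_def
      using ab by (intro conjI is_interval_box bexI[of _ "(2*a+b)/3"] bexI[of _ "(a+2*b)/3"]) auto
    moreover have "{a<..<b} \<subseteq> fst ` ?K"
    proof
      fix d assume "d \<in> {a<..<b}"
      then obtain y where "(d, y) \<notin> U \<union> V" using H by auto
      then show "d \<in> fst ` ?K" by (intro image_eqI[of _ _ "(d,y)"]) auto
    qed
    ultimately have "?K \<inter> ?G \<noteq> {}" using assms by blast
    then show False using cov unfolding graph_def by auto
  qed
  have o1: "open {x. (x, F x) \<in> U}"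
    by (rule side_open[OF oU oV disj dense cov])
  have o2: "open {x. (x, F x) \<in> V}"
  proof (rule side_open[OF oV oU])
    show "V \<inter> U = {}" using disj by blast
    show "\<exists>d. a < d \<and> d < b \<and> (\<forall>y. (d, y) \<in> V \<union> U)" if "a < b" for a b
      using dense[OF that] by (simp add: Un_commute)
    show "(x, F x) \<in> V \<union> U" for x using cov[of x] by blast
  qed
  obtain p where p: "p \<in> S1" using S1ne by auto
  obtain q where q: "q \<in> S2" using S1ne by auto
  have "fst p \<in> {x. (x, F x) \<in> U}" using p sub1 unfolding S1_def graph_def by auto
  moreover have "fst q \<in> {x. (x, F x) \<in> V}" using q sub2 unfolding S2_def graph_def by auto
  ultimately show False
    using connected_UNIV[where 'a=real] o1 o2 disj cov
    unfolding connected_def by blast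
qed

end
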